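(* Let $\widetilde D,\widetilde C\in\mathbb{R}^{d\times d}$ satisfy Condition $\widetilde A$, let $K$ be the unique symmetric positive definite solution of $2\widetilde D=\widetilde CK+K\widetilde C^T$, and set $C:=K^{-1/2}\widetilde CK^{1/2}$, $C_S:=\frac12(C+C^T)$, $C_{AS}:=\frac12(C-C^T)$. For $m\in\mathbb N_0$ define $$T_m:=\sum_{j=0}^m C_{AS}^j C_S (C_{AS}^T)^j,\qquad \widetilde T_m:=\sum_{j=0}^m \widetilde C^j\widetilde D(\widetilde C^T)^j.$$ Then for every $m\in\mathbb N_0$: $T_m$ is positive definite if and only if $\widetilde T_m$ is positive definite. In particular the minimal $m$ with $T_m>0$ equals the minimal $m$ with $\widetilde T_m>0$.
   Context: Condition $\widetilde A$: (1) $\widetilde D$ is symmetric positive semi-definite; (2) there is no non-trivial $\widetilde C^T$-invariant subspace of $\ker\widetilde D$; (3) $\widetilde C$ is positive stable, i.e. all its eigenvalues have positive real part. Under this condition the symmetric positive definite solution $K$ of the Lyapunov equation exists and is unique, and $K^{-1/2}\widetilde DK^{-1/2}=C_S$. The minimal $m$ with $T_m>0$ (resp. $\widetilde T_m>0$) is called the hypocoercivity index. *)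

theory Defs
  imports "HOL-Analysis.Analysis"
begin

text \<open>Matrix powers with respect to the matrix product (the operator ^ on vec is componentwise).\<close>
fun matpow :: "'a::semiring_1 ^'n^'n \<Rightarrow> nat \<Rightarrow> 'a^'n^'n" where
  "matpow A 0 = mat 1"
| "matpow A (Suc k) = A ** matpow A k"

definition symmetric_mat :: "real^'n^'n \<Rightarrow> bool" where
  "symmetric_mat A \<longleftrightarrow> transpose A = A"

definition pos_semidef :: "real^'n^'n \<Rightarrow> bool" where
  "pos_semidef A \<longleftrightarrow> symmetric_mat A \<and> (\<forall>x. 0 \<le> x \<bullet> (A *v x))"

definition pos_def :: "real^'n^'n \<Rightarrow> bool" where
  "pos_def A \<longleftrightarrow> symmetric_mat A \<and> (\<forall>x. x \<noteq> 0 \<longrightarrow> 0 < x \<bullet> (A *v x))"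

definition complexify :: "real^'n^'n \<Rightarrow> complex^'n^'n" where
  "complexify A = (\<chi> i j. complex_of_real (A $ i $ j))"

definition positive_stable :: "real^'n^'n \<Rightarrow> bool" where
  "positive_stable A \<longleftrightarrow>
     (\<forall>(l::complex) (v::complex^'n). v \<noteq> 0 \<and> complexify A *v v = l *s v \<longrightarrow> 0 < Re l)"

definition condition_A :: "real^'n^'n \<Rightarrow> real^'n^'n \<Rightarrow> bool" where
  "condition_A D C \<longleftrightarrow>
     pos_semidef D \<and>
     (\<forall>V. subspace V \<and> V \<subseteq> {x. D *v x = 0} \<and> (\<forall>x\<in>V. transpose C *v x \<in> V)
          \<longrightarrow> V = {0}) \<and>
     positive_stable C"

end

theory Submission
  imports Defs
begin

lemma matpow_comm: "matpow A k ** A = A ** matpow A k"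
  by (induction k) (simp_all add: matrix_mul_assoc[symmetric])

lemma transpose_matpow: "transpose (matpow (A::real^'n^'n) k) = matpow (transpose A) k"
  by (induction k) (simp_all add: matrix_transpose_mul matpow_comm)

lemma dot_transpose: "(x::real^'n) \<bullet> (A *v y) = (transpose A *v x) \<bullet> y"
  by (simp add: dot_lmul_matrix)

lemma transpose_sum: "transpose (sum f A) = (\<Sum>j\<in>A. transpose (f j :: real^'n^'m))"
  by (simp add: transpose_def vec_eq_iff)

lemma sum_mulv: "(sum f A) *v (x::real^'n) = (\<Sum>j\<in>A. (f j :: real^'n^'m) *v x)"
  by (simp add: matrix_vector_mult_def vec_eq_iff sum_distrib_right sum.swap[of _ _ A])

lemma psd_null:
  fixes P :: "real^'n^'n"
  assumes sym: "symmetric_mat P" and psd: "\<forall>x. 0 \<le> x \<bullet> (P *v x)" and y: "y \<bullet> (P *v y) = 0"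
  shows "P *v y = 0"
proof -
  let ?z = "P *v y"
  define a where "a = ?z \<bullet> ?z"
  define b where "b = ?z \<bullet> (P *v ?z)"
  have b0: "b \<ge> 0" using psd b_def by auto
  have sy: "y \<bullet> (P *v ?z) = a"
    using dot_transpose[of y P ?z] sym unfolding symmetric_mat_def a_def by metis
  have "\<forall>t::real. 0 \<le> 2 * t * a + t^2 * b"
  proof
    fix t :: real
    have "0 \<le> (y + t *\<^sub>R ?z) \<bullet> (P *v (y + t *\<^sub>R ?z))" using psd by blast
    also have "\<dots> = y \<bullet> (P *v y) + t * (y \<bullet> (P *v ?z)) + t * (?z \<bullet> (P *v y)) + t^2 * b"
      by (simp add: matrix_vector_right_distrib matrix_vector_mult_scaleR inner_add_left inner_add_right b_def power2_eq_square algebra_simps)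
    also have "\<dots> = 2 * t * a + t^2 * b" using y sy by (simp add: a_def)
    finally show "0 \<le> 2 * t * a + t^2 * b" .
  qed
  hence h: "0 \<le> 2 * (- a/(b+1)) * a + (- a/(b+1))^2 * b" by blast
  have "a = 0"
  proof (rule ccontr)
    assume "a \<noteq> 0"
    hence ap: "a > 0" by (simp add: a_def)
    have "2 * (- a/(b+1)) * a + (- a/(b+1))^2 * b = a^2 * (b - 2*(b+1)) / (b+1)^2"
      using b0 by (simp add: divide_simps power2_eq_square) (simp add: algebra_simps)
    also have "\<dots> < 0" using ap b0 by (intro divide_neg_pos mult_pos_neg) auto
    finally show False using h by linarith
  qed
  thus ?thesis by (simp add: a_def)
qed


definition gsum :: "real^'n^'n \<Rightarrow> real^'n^'n \<Rightarrow> nat \<Rightarrow> real^'n^'n" where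
  "gsum B P m = (\<Sum>j\<le>m. matpow B j ** P ** matpow (transpose B) j)"

lemma gsum_sym: "symmetric_mat P \<Longrightarrow> symmetric_mat (gsum B P m)"
  unfolding gsum_def symmetric_mat_def transpose_sum
  by (simp add: matrix_transpose_mul transpose_matpow matrix_mul_assoc)

lemma gsum_quad: "x \<bullet> (gsum B P m *v x) =
   (\<Sum>j\<le>m. (matpow (transpose B) j *v x) \<bullet> (P *v (matpow (transpose B) j *v x)))"
proof -
  have "x \<bullet> ((matpow B j ** P ** matpow (transpose B) j) *v x) =
        (matpow (transpose B) j *v x) \<bullet> (P *v (matpow (transpose B) j *v x))" for j
    using dot_transpose[of x "matpow B j" "P *v (matpow (transpose B) j *v x)"]
    by (simp only: matrix_vector_mul_assoc[symmetric] transpose_matpow)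
  thus ?thesis unfolding gsum_def sum_mulv inner_sum_right by simp
qed

lemma gsum_pos_def:
  assumes sym: "symmetric_mat P" and psd: "\<forall>x. 0 \<le> x \<bullet> (P *v x)"
  shows "pos_def (gsum B P m) \<longleftrightarrow>
    (\<forall>x. (\<forall>j\<le>m. P *v (matpow (transpose B) j *v x) = 0) \<longrightarrow> x = 0)"
proof -
  have iff: "x \<bullet> (gsum B P m *v x) = 0 \<longleftrightarrow> (\<forall>j\<le>m. P *v (matpow (transpose B) j *v x) = 0)" for x
  proof -
    have "x \<bullet> (gsum B P m *v x) = 0 \<longleftrightarrow>
      (\<forall>j\<in>{..m}. (matpow (transpose B) j *v x) \<bullet> (P *v (matpow (transpose B) j *v x)) = 0)"
      unfolding gsum_quad by (rule sum_nonneg_eq_0_iff) (use psd in auto)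
    also have "\<dots> \<longleftrightarrow> (\<forall>j\<le>m. P *v (matpow (transpose B) j *v x) = 0)"
      using psd_null[OF sym psd] by auto
    finally show ?thesis .
  qed
  have nn: "0 \<le> x \<bullet> (gsum B P m *v x)" for x
    unfolding gsum_quad using psd by (simp add: sum_nonneg)
  show ?thesis
    unfolding pos_def_def using gsum_sym[OF sym, of B m] iff nn
    by (metis order_less_le)
qed

lemma kernel_step:
  fixes A B P :: "real^'n^'n"
  assumes AB: "A = P + B"
  shows "(\<forall>j<k. P *v (matpow A j *v x) = 0) \<Longrightarrow> matpow A k *v x = matpow B k *v x"
proof (induction k)
  case 0
  then show ?case by simp
next
  case (Suc k)
  have e: "matpow A k *v x = matpow B k *v x" using Suc by auto
  have "P *v (matpow A k *v x) = 0" using Suc.prems by auto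
  hence "P *v (matpow B k *v x) = 0" using e by simp
  thus ?case using e
    by (simp add: matrix_vector_mul_assoc[symmetric] AB matrix_vector_mult_add_rdistrib)
qed

lemma kernel_step2:
  fixes A B P :: "real^'n^'n"
  assumes AB: "A = P + B"
  shows "(\<forall>j<k. P *v (matpow B j *v x) = 0) \<Longrightarrow> matpow A k *v x = matpow B k *v x"
  by (induction k) (simp_all add: AB matrix_vector_mul_assoc[symmetric] matrix_vector_mult_add_rdistrib)

lemma kernel_eq:
  fixes A B P :: "real^'n^'n"
  assumes AB: "A = P + B"
  shows "(\<forall>j\<le>m. P *v (matpow A j *v x) = 0) \<longleftrightarrow> (\<forall>j\<le>m. P *v (matpow B j *v x) = 0)"
proof
  assume h: "\<forall>j\<le>m. P *v (matpow A j *v x) = 0"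
  show "\<forall>j\<le>m. P *v (matpow B j *v x) = 0"
  proof (intro allI impI)
    fix j assume "j \<le> m"
    hence "\<forall>i<j. P *v (matpow A i *v x) = 0" using h by auto
    thus "P *v (matpow B j *v x) = 0" using kernel_step[OF AB] h \<open>j \<le> m\<close> by metis
  qed
next
  assume h: "\<forall>j\<le>m. P *v (matpow B j *v x) = 0"
  show "\<forall>j\<le>m. P *v (matpow A j *v x) = 0"
  proof (intro allI impI)
    fix j assume "j \<le> m"
    hence "\<forall>i<j. P *v (matpow B i *v x) = 0" using h by auto
    thus "P *v (matpow A j *v x) = 0" using kernel_step2[OF AB] h \<open>j \<le> m\<close> by metis
  qed
qed


lemma conj_quad:
  fixes S M :: "real^'n^'n"
  assumes "transpose S = S"
  shows "x \<bullet> ((S ** M ** S) *v x) = (S *v x) \<bullet> (M *v (S *v x))"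
  using dot_transpose[of x S "M *v (S *v x)"] assms
  by (simp only: matrix_vector_mul_assoc[symmetric])

lemma conj_pos_def:
  fixes S Si M :: "real^'n^'n"
  assumes St: "transpose S = S" and inv: "Si ** S = mat 1" "S ** Si = mat 1"
  shows "pos_def (S ** M ** S) \<longleftrightarrow> pos_def M"
proof -
  have SiT: "transpose Si ** S = mat 1"
    using arg_cong[OF inv(2), of transpose] St by (simp add: matrix_transpose_mul)
  have SSiT: "S ** transpose Si = mat 1"
    using arg_cong[OF inv(1), of transpose] St by (simp add: matrix_transpose_mul)
  have sym: "symmetric_mat (S ** M ** S) \<longleftrightarrow> symmetric_mat M"
  proof
    assume "symmetric_mat (S ** M ** S)"
    hence "S ** transpose M ** S = S ** M ** S"
      unfolding symmetric_mat_def using St by (simp add: matrix_transpose_mul matrix_mul_assoc)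
    hence "Si ** (S ** transpose M ** S) ** Si = Si ** (S ** M ** S) ** Si" by simp
    thus "symmetric_mat M" unfolding symmetric_mat_def
      by (simp add: matrix_mul_assoc inv) (simp add: matrix_mul_assoc[symmetric] inv)
  next
    assume "symmetric_mat M"
    thus "symmetric_mat (S ** M ** S)"
      unfolding symmetric_mat_def using St by (simp add: matrix_transpose_mul matrix_mul_assoc)
  qed
  have Sx: "S *v x = 0 \<longleftrightarrow> x = 0" for x
    by (metis inv(1) matrix_vector_mul_assoc matrix_vector_mul_lid matrix_vector_mult_0_right)
  have "(\<forall>x. x \<noteq> 0 \<longrightarrow> 0 < x \<bullet> ((S ** M ** S) *v x)) \<longleftrightarrow> (\<forall>y. y \<noteq> 0 \<longrightarrow> 0 < y \<bullet> (M *v y))"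
  proof
    assume h: "\<forall>x. x \<noteq> 0 \<longrightarrow> 0 < x \<bullet> ((S ** M ** S) *v x)"
    show "\<forall>y. y \<noteq> 0 \<longrightarrow> 0 < y \<bullet> (M *v y)"
    proof (intro allI impI)
      fix y :: "real^'n" assume y: "y \<noteq> 0"
      have e: "S *v (Si *v y) = y" by (simp add: matrix_vector_mul_assoc inv)
      hence "Si *v y \<noteq> 0" using y by auto
      thus "0 < y \<bullet> (M *v y)" using h conj_quad[OF St, of "Si *v y" M] e by metis
    qed
  next
    assume h: "\<forall>y. y \<noteq> 0 \<longrightarrow> 0 < y \<bullet> (M *v y)"
    show "\<forall>x. x \<noteq> 0 \<longrightarrow> 0 < x \<bullet> ((S ** M ** S) *v x)"
      using h Sx conj_quad[OF St] by metis
  qed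
  thus ?thesis using sym unfolding pos_def_def by blast
qed


lemma matrix_add_rdistrib': "((A::real^'n^'m) + B) ** C = A ** C + B ** C"
  by (vector matrix_matrix_mult_def sum.distrib field_simps)

lemma smul_mid: "(S::real^'n^'n) ** (c *\<^sub>R X) ** T = c *\<^sub>R (S ** X ** T)"
  by (simp add: scalar_matrix_assoc matrix_scalar_ac)

lemma matrix_mul_sum_left: "finite I \<Longrightarrow> (A::real^'n^'n) ** sum f I = (\<Sum>j\<in>I. A ** f j)"
  by (induction I rule: finite_induct) (simp_all add: matrix_add_ldistrib)

lemma matrix_mul_sum_right: "finite I \<Longrightarrow> sum f I ** (A::real^'n^'n) = (\<Sum>j\<in>I. f j ** A)"
  by (induction I rule: finite_induct) (simp_all add: matrix_add_rdistrib')

theorem proposition3p11: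
  fixes Dt Ct K S :: "real^'n^'n"
  assumes condA: "condition_A Dt Ct"
    and K_pd: "pos_def K"
    and lyap: "2 *\<^sub>R Dt = Ct ** K + K ** transpose Ct"
    and S_pd: "pos_def S"
    and S_sqrt: "S ** S = K"
  shows "let C = matrix_inv S ** Ct ** S;
             CS = (1/2) *\<^sub>R (C + transpose C);
             CAS = (1/2) *\<^sub>R (C - transpose C);
             T = (\<lambda>m. \<Sum>j\<le>m. matpow CAS j ** CS ** matpow (transpose CAS) j);
             Tt = (\<lambda>m. \<Sum>j\<le>m. matpow Ct j ** Dt ** matpow (transpose Ct) j)
         in (\<forall>m. pos_def (T m) \<longleftrightarrow> pos_def (Tt m))
            \<and> (LEAST m. pos_def (T m)) = (LEAST m. pos_def (Tt m))"
proof -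
  define Si where "Si = matrix_inv S"
  define C where "C = Si ** Ct ** S"
  define CS where "CS = (1/2::real) *\<^sub>R (C + transpose C)"
  define CAS where "CAS = (1/2::real) *\<^sub>R (C - transpose C)"
  have St: "transpose S = S" using S_pd unfolding pos_def_def symmetric_mat_def by blast
  have "\<forall>x. S *v x = 0 \<longrightarrow> x = 0"
    using S_pd unfolding pos_def_def by (metis inner_zero_right less_irrefl)
  hence "invertible S" using matrix_left_invertible_ker invertible_left_inverse by blast
  hence inv: "S ** Si = mat 1" "Si ** S = mat 1"
    unfolding Si_def matrix_inv_def invertible_def by (metis (mono_tags, lifting) someI_ex)+
  have inv3: "X ** S ** Si = X" "X ** Si ** S = X" for X :: "real^'n^'n"
    by (simp_all add: matrix_mul_assoc[symmetric] inv)
  have SSiT: "S ** transpose Si = mat 1"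
    using arg_cong[OF inv(2), of transpose] St by (simp add: matrix_transpose_mul)
  have inv4: "X ** S ** transpose Si = X" for X :: "real^'n^'n"
    by (simp_all add: matrix_mul_assoc[symmetric] SSiT)
  have Ct: "Ct = S ** C ** Si"
    unfolding C_def by (simp add: matrix_mul_assoc inv inv3)
  have Ctpow: "matpow Ct j = S ** matpow C j ** Si" for j
  proof (induction j)
    case 0 thus ?case by (simp add: inv)
  next
    case (Suc j) thus ?case by (simp add: Ct matrix_mul_assoc inv3)
  qed
  have CtT: "transpose Ct = transpose Si ** transpose C ** S"
    unfolding Ct using St by (simp add: matrix_transpose_mul matrix_mul_assoc)
  have "2 *\<^sub>R Dt = S ** C ** S + S ** transpose C ** S"
    unfolding lyap CtT S_sqrt[symmetric] unfolding Ct by (simp add: matrix_mul_assoc inv3 inv4)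
  also have "\<dots> = 2 *\<^sub>R (S ** CS ** S)"
    unfolding CS_def
    by (simp add: matrix_add_ldistrib matrix_add_rdistrib' smul_mid)
  finally have Dt: "Dt = S ** CS ** S" by simp
  have CSsym: "symmetric_mat CS"
    unfolding symmetric_mat_def CS_def by (simp add: transpose_def vec_eq_iff)
  have Dtpsd: "\<forall>x. 0 \<le> x \<bullet> (Dt *v x)"
    using condA unfolding condition_A_def pos_semidef_def by blast
  have CSpsd: "\<forall>x. 0 \<le> x \<bullet> (CS *v x)"
  proof
    fix x :: "real^'n"
    have e: "S *v (Si *v x) = x" by (simp add: matrix_vector_mul_assoc inv)
    have "x \<bullet> (CS *v x) = (Si *v x) \<bullet> (Dt *v (Si *v x))"
      unfolding Dt conj_quad[OF St] e ..
    thus "0 \<le> x \<bullet> (CS *v x)" using Dtpsd by simp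
  qed
  have CT: "transpose C = CS + transpose CAS"
    unfolding CS_def CAS_def by (simp add: transpose_def vec_eq_iff field_simps)
  have CtpowT: "matpow (transpose Ct) j = transpose Si ** matpow (transpose C) j ** S" for j
    unfolding transpose_matpow[symmetric] Ctpow using St
    by (simp add: matrix_transpose_mul matrix_mul_assoc transpose_matpow)
  have Tt: "gsum Ct Dt m = S ** gsum C CS m ** S" for m
  proof -
    have "matpow Ct j ** Dt ** matpow (transpose Ct) j = S ** (matpow C j ** CS ** matpow (transpose C) j) ** S" for j
      unfolding Ctpow CtpowT Dt by (simp add: matrix_mul_assoc inv3 inv4)
    thus ?thesis unfolding gsum_def
      by (simp add: matrix_mul_sum_left matrix_mul_sum_right)
  qed
  have main: "pos_def (gsum CAS CS m) \<longleftrightarrow> pos_def (gsum Ct Dt m)" for m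
  proof -
    have "pos_def (gsum CAS CS m) \<longleftrightarrow> pos_def (gsum C CS m)"
      unfolding gsum_pos_def[OF CSsym CSpsd] kernel_eq[OF CT] ..
    also have "\<dots> \<longleftrightarrow> pos_def (gsum Ct Dt m)"
      unfolding Tt conj_pos_def[OF St inv(2) inv(1)] ..
    finally show ?thesis .
  qed
  show ?thesis
    unfolding Let_def Si_def[symmetric] C_def[symmetric] CS_def[symmetric] CAS_def[symmetric]
    unfolding gsum_def[symmetric]
    using main by simp
qed

end
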